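(* Consider natural gradient descent with momentum $\mu\in[0,1)$ on linear regression with label noise in the limit $N\to\infty$, i.e., with preconditioning matrix $\Lambda:=\frac\lambda S C^{-1}$, where $C=\frac1S(A\Sigma A+\mathrm{Tr}[A\Sigma]A+\sigma^2A)$. Let $g:=\frac{1}{1+D}\frac{1}{1+\mu}+\frac{1}{1-\mu}\frac1S$ and $$x:=\frac\lambda4g-\frac12\frac{\sigma^2}{1+D}+\frac14\sqrt{\lambda^2g^2+4\lambda\left(g-\frac{2}{1+D}\frac{1}{1+\mu}\right)\frac{\sigma^2}{1+D}+4\left(\frac{\sigma^2}{1+D}\right)^2}.$$ Then the model fluctuation is $\Sigma=xA^{-1}$, in the sense that $\Sigma=xA^{-1}$ (with the corresponding $C$ and $\Lambda$) solves the stationarity equation $(1-\mu)(\Lambda A\Sigma+\Sigma A\Lambda)-\frac{1+\mu^2}{1-\mu^2}\Lambda A\Sigma A\Lambda+\frac{\mu}{1-\mu^2}(\Lambda A\Lambda A\Sigma+\Sigma A\Lambda A\Lambda)=\Lambda C\Lambda$.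
   Context: Data: $x_i\in\mathbb{R}^D$ i.i.d. $\mathcal N(0,A)$, $A$ symmetric positive definite; $y_i=\mathbf{u}^{\mathrm T}x_i+\epsilon_i$ with label noise of mean $0$ and variance $\sigma^2$; squared loss with Hessian $A$; batch size $S$; learning rate $\lambda>0$. $\Sigma$ denotes the stationary covariance $\mathbb{E}[(\mathbf{w}-\mathbf{u})(\mathbf{w}-\mathbf{u})^{\mathrm T}]$ and $C$ the averaged minibatch noise covariance (equal to the Fisher information in this setting). *)

theory Defs
  imports "HOL-Analysis.Analysis"
begin

end

theory Submission
  imports Defs
begin

theorem proposition6:
  fixes A Sig C Lam :: "real^'n^'n"
    and lr mu sigma g x :: real
    and S :: nat
  assumes A_sym: "transpose A = A"
    and A_pd: "\<And>v :: real^'n. v \<noteq> 0 \<Longrightarrow> v \<bullet> (A *v v) > 0"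
    and lr_pos: "lr > 0"
    and S_pos: "S \<ge> 1"
    and mu_range: "0 \<le> mu" "mu < 1"
    and g_def: "g = (1 / (1 + real CARD('n))) * (1 / (1 + mu)) + (1 / (1 - mu)) * (1 / real S)"
    and x_def: "x = lr / 4 * g - 1/2 * (sigma^2 / (1 + real CARD('n)))
        + 1/4 * sqrt (lr^2 * g^2
            + 4 * lr * (g - 2 / (1 + real CARD('n)) * (1 / (1 + mu))) * (sigma^2 / (1 + real CARD('n)))
            + 4 * (sigma^2 / (1 + real CARD('n)))^2)"
    and Sig_def: "Sig = x *\<^sub>R matrix_inv A"
    and C_def: "C = (1 / real S) *\<^sub>R (A ** Sig ** A + trace (A ** Sig) *\<^sub>R A + sigma^2 *\<^sub>R A)"
    and Lam_def: "Lam = (lr / real S) *\<^sub>R matrix_inv C"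
  shows "(1 - mu) *\<^sub>R (Lam ** A ** Sig + Sig ** A ** Lam)
        - ((1 + mu^2) / (1 - mu^2)) *\<^sub>R (Lam ** A ** Sig ** A ** Lam)
        + (mu / (1 - mu^2)) *\<^sub>R (Lam ** A ** Lam ** A ** Sig + Sig ** A ** Lam ** A ** Lam)
      = Lam ** C ** Lam"

proof -
  define D where "D = real CARD('n)"
  define E where "E = 1 + D"
  define k where "k = sigma^2 / E"
  define Ai where "Ai = matrix_inv A"
  have E_pos: "E > 0" unfolding E_def D_def by simp
  have k_nn: "k \<ge> 0" unfolding k_def using E_pos by simp
  have inj: "\<forall>v. A *v v = 0 \<longrightarrow> v = 0"
    using A_pd by (metis inner_zero_right less_irrefl)
  then obtain B where "B ** A = mat 1" using matrix_left_invertible_ker by blast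
  then have invA: "invertible A" using invertible_left_inverse by blast
  then have AAi: "A ** Ai = mat 1" and AiA: "Ai ** A = mat 1"
    unfolding Ai_def matrix_inv_def invertible_def by (metis (mono_tags, lifting) someI_ex)+
  have mu1: "1 - mu > 0" "1 + mu > 0" using mu_range by auto
  have Spos: "real S > 0" using S_pos by simp
  define a where "a = 1 / (E * (1 + mu))"
  define b where "b = 1 / (real S * (1 - mu))"
  have apos: "a > 0" and bpos: "b > 0" unfolding a_def b_def using E_pos mu1 Spos by auto
  have g_ab: "g = a + b" unfolding g_def a_def b_def E_def D_def by simp
  define s where "s = sqrt ((lr * g - 2 * k)^2 + 8 * b * lr * k)"
  have rad: "lr^2 * g^2 + 4 * lr * (g - 2 / (1 + real CARD('n)) * (1 / (1 + mu))) * (sigma^2 / (1 + real CARD('n)))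
            + 4 * (sigma^2 / (1 + real CARD('n)))^2 = (lr * g - 2 * k)^2 + 8 * b * lr * k"
  proof -
    have e1: "2 / (1 + real CARD('n)) * (1 / (1 + mu)) = 2 * a" unfolding a_def E_def D_def by simp
    have e2: "sigma^2 / (1 + real CARD('n)) = k" unfolding k_def E_def D_def by simp
    show ?thesis unfolding e1 e2 g_ab by (simp add: power2_eq_square algebra_simps)
  qed
  have x4: "4 * x = lr * g - 2 * k + s" proof -
    have e2: "sigma^2 / (1 + real CARD('n)) = k" unfolding k_def E_def D_def by simp
    show ?thesis unfolding x_def rad unfolding s_def e2 by (simp add: algebra_simps)
  qed
  have Dnn: "(lr * g - 2 * k)^2 + 8 * b * lr * k \<ge> 0" using bpos lr_pos k_nn by (intro add_nonneg_nonneg mult_nonneg_nonneg) auto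
  have s_nn: "s \<ge> 0" unfolding s_def using Dnn by simp
  have s2: "s^2 = (lr * g - 2 * k)^2 + 8 * b * lr * k" unfolding s_def using Dnn by simp
  have quad: "2 * x^2 - x * (lr * g - 2 * k) = b * lr * k"
  proof -
    have "s = 4 * x - (lr * g - 2 * k)" using x4 by simp
    then have "(4 * x - (lr * g - 2 * k))^2 = (lr * g - 2 * k)^2 + 8 * b * lr * k" using s2 by simp
    then show ?thesis by (simp add: power2_eq_square algebra_simps)
  qed
  have xk: "x + k > 0"
  proof -
    have "g > 0" using g_ab apos bpos by simp
    then have "4 * (x + k) > 0" using x4 s_nn k_nn lr_pos by (smt (verit) mult_pos_pos)
    then show ?thesis by simp
  qed
  define c where "c = E * (x + k) / real S"
  have c_pos: "c > 0" unfolding c_def using E_pos xk Spos by simp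
  have ASig: "A ** Sig = x *\<^sub>R mat 1"
    unfolding Sig_def Ai_def[symmetric] matrix_scalar_ac scalar_matrix_assoc[symmetric] AAi ..
  have trA: "trace (A ** Sig) = x * D"
    unfolding ASig by (simp add: trace_def mat_def D_def)
  have C_eq: "C = c *\<^sub>R A"
  proof -
    have "A ** Sig ** A = x *\<^sub>R A"
      unfolding ASig scalar_matrix_assoc[symmetric] by simp
    then have "C = (1 / real S) *\<^sub>R ((x + x * D + sigma^2) *\<^sub>R A)"
      unfolding C_def trA by (simp only: scaleR_add_left)
    also have "... = ((x + x * D + sigma^2) / real S) *\<^sub>R A" by simp
    also have "(x + x * D + sigma^2) / real S = c"
    proof -
      have "E * (x + k) = E * x + sigma^2" unfolding k_def using E_pos by (simp add: distrib_left)
      also have "... = x + x * D + sigma^2" unfolding E_def by (simp add: algebra_simps)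
      finally show ?thesis unfolding c_def by simp
    qed
    finally show ?thesis .
  qed
  have Ci: "matrix_inv C = (1 / c) *\<^sub>R Ai"
  proof -
    have i1: "C ** ((1 / c) *\<^sub>R Ai) = mat 1" "((1 / c) *\<^sub>R Ai) ** C = mat 1"
      unfolding C_eq using c_pos
      by (simp_all add: matrix_scalar_ac scalar_matrix_assoc[symmetric] AAi AiA)
    then have "invertible C" unfolding invertible_def by blast
    then have "matrix_inv C ** C = mat 1"
      unfolding matrix_inv_def invertible_def by (metis (mono_tags, lifting) someI_ex)
    then have "matrix_inv C ** (C ** ((1 / c) *\<^sub>R Ai)) = (1 / c) *\<^sub>R Ai"
      by (simp add: matrix_mul_assoc)
    then show ?thesis using i1 by simp
  qed
  define l where "l = lr / (real S * c)"
  have Lam_eq: "Lam = l *\<^sub>R Ai" unfolding Lam_def Ci l_def by simp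
  have Sig_eq: "Sig = x *\<^sub>R Ai" unfolding Sig_def Ai_def ..
  have P1: "(p *\<^sub>R Ai) ** A ** (q *\<^sub>R Ai) = (p * q) *\<^sub>R Ai" for p q
    unfolding matrix_scalar_ac scalar_matrix_assoc[symmetric] AiA by simp
  have P2: "(p *\<^sub>R Ai) ** A ** (q *\<^sub>R Ai) ** A ** (r *\<^sub>R Ai) = (p * q * r) *\<^sub>R Ai" for p q r
    unfolding P1 ..
  have P3: "(p *\<^sub>R Ai) ** (q *\<^sub>R A) ** (r *\<^sub>R Ai) = (p * q * r) *\<^sub>R Ai" for p q r
    unfolding matrix_scalar_ac scalar_matrix_assoc[symmetric] AiA by simp
  have lhs: "(1 - mu) *\<^sub>R (Lam ** A ** Sig + Sig ** A ** Lam)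
        - ((1 + mu^2) / (1 - mu^2)) *\<^sub>R (Lam ** A ** Sig ** A ** Lam)
        + (mu / (1 - mu^2)) *\<^sub>R (Lam ** A ** Lam ** A ** Sig + Sig ** A ** Lam ** A ** Lam)
      = ((1 - mu) * (l * x) + (1 - mu) * (x * l) - ((1 + mu^2) / (1 - mu^2)) * (l * x * l)
         + (mu / (1 - mu^2)) * (l * l * x) + (mu / (1 - mu^2)) * (x * l * l)) *\<^sub>R Ai"
    unfolding Lam_eq Sig_eq P1 P2
    by (simp only: scaleR_add_right scaleR_add_left scaleR_diff_left scaleR_scaleR add.assoc)
  have rhs: "Lam ** C ** Lam = (l * c * l) *\<^sub>R Ai"
    unfolding Lam_eq C_eq P3 ..
  have scal: "(1 - mu) * (l * x) + (1 - mu) * (x * l) - ((1 + mu^2) / (1 - mu^2)) * (l * x * l)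
         + (mu / (1 - mu^2)) * (l * l * x) + (mu / (1 - mu^2)) * (x * l * l) = l * c * l"
  proof -
    have lc: "l * c = lr / real S" unfolding l_def using c_pos Spos by simp
    have l_eq: "l = lr / (E * (x + k))" unfolding l_def c_def using Spos by simp
    have q2: "2 * x * (x + k) - a * lr * x = b * lr * (x + k)"
      using quad unfolding g_ab by (simp add: power2_eq_square algebra_simps)
    have ha: "a * (E * (1 + mu)) = 1" unfolding a_def using E_pos mu1 by simp
    have hb: "b * (real S * (1 - mu)) = 1" unfolding b_def using Spos mu1 by simp
    have aM: "a * lr * x * (E * (1 + mu) * real S * (1 - mu)) = (a * (E * (1 + mu))) * (lr * x * real S * (1 - mu))"
      by (simp add: algebra_simps)
    have bM: "b * lr * (x + k) * (E * (1 + mu) * real S * (1 - mu)) = (b * (real S * (1 - mu))) * (lr * (x + k) * E * (1 + mu))"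
      by (simp add: algebra_simps)
    have q3: "2 * x * (x + k) * E * (1 + mu) * real S * (1 - mu) - lr * x * real S * (1 - mu)
        = lr * (x + k) * E * (1 + mu)"
    proof -
      have "(2 * x * (x + k) - a * lr * x) * (E * (1 + mu) * real S * (1 - mu))
          = (b * lr * (x + k)) * (E * (1 + mu) * real S * (1 - mu))" using q2 by simp
      then have "2 * x * (x + k) * (E * (1 + mu) * real S * (1 - mu)) - a * lr * x * (E * (1 + mu) * real S * (1 - mu))
          = b * lr * (x + k) * (E * (1 + mu) * real S * (1 - mu))" by (simp add: left_diff_distrib)
      then show ?thesis unfolding aM bM ha hb by (simp add: algebra_simps)
    qed
    define M where "M = (1 + mu) * (E * (x + k)) * real S"
    have Mpos: "M > 0" unfolding M_def using mu1 E_pos xk Spos by simp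
    have lE: "l * (E * (x + k)) = lr" unfolding l_eq using E_pos xk by simp
    define t where "t = (1 - mu) / (1 + mu)"
    have ht: "t * (1 + mu) = 1 - mu" unfolding t_def using mu1 by simp
    have L1: "(2 * (1 - mu) * x - (1 - mu) / (1 + mu) * l * x) * M
        = 2 * x * (x + k) * E * (1 + mu) * real S * (1 - mu) - (t * (1 + mu)) * (l * (E * (x + k))) * x * real S"
      unfolding M_def t_def[symmetric] by (simp add: algebra_simps)
    have L2: "(lr / real S) * M = lr * (x + k) * E * (1 + mu)"
      unfolding M_def using Spos by simp
    have key: "2 * (1 - mu) * x - (1 - mu) / (1 + mu) * l * x = lr / real S"
    proof -
      have "(2 * (1 - mu) * x - (1 - mu) / (1 + mu) * l * x) * M = (lr / real S) * M"
        unfolding L1 L2 lE ht using q3 by (simp add: algebra_simps)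
      then show ?thesis using Mpos by (metis less_irrefl mult_right_cancel)
    qed
    have m: "(1 + mu^2) / (1 - mu^2) - 2 * mu / (1 - mu^2) = (1 - mu) / (1 + mu)"
    proof -
      have "1 - mu^2 = (1 - mu) * (1 + mu)" by (simp add: power2_eq_square algebra_simps)
      moreover have "1 + mu^2 - 2 * mu = (1 - mu) * (1 - mu)" by (simp add: power2_eq_square algebra_simps)
      ultimately show ?thesis using mu1 by (simp add: diff_divide_distrib[symmetric])
    qed
    have "(1 - mu) * (l * x) + (1 - mu) * (x * l) - ((1 + mu^2) / (1 - mu^2)) * (l * x * l)
         + (mu / (1 - mu^2)) * (l * l * x) + (mu / (1 - mu^2)) * (x * l * l)
        = l * (2 * (1 - mu) * x - ((1 + mu^2) / (1 - mu^2) - 2 * mu / (1 - mu^2)) * l * x)"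
      by (simp add: algebra_simps)
    also have "... = l * (l * c)" unfolding m key lc ..
    finally show ?thesis by (simp add: algebra_simps)
  qed
  show ?thesis unfolding lhs rhs scal ..
qed

end
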